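(* Suppose every $f_i$ is monotone and submodular. Consider a round of the while-loop of the Randomized meta-Greedy algorithm at which the current sets satisfy $|S^t_{\rm tr}|<l$ and $|S^t_i|<k-l$, and let $S^{t+1}_{\rm tr},S^{t+1}_i$ be the sets after the round. Then $$\mathbb{E}\Bigl[\sum_{i=1}^m f_i(S^{t+1}_{\rm tr}\cup S^{t+1}_i)-f_i(S^{t}_{\rm tr}\cup S^{t}_i)\,\Big|\,S^t_{\rm tr},S^t_1,\dots,S^t_m\Bigr]\;\ge\;\frac1k\Bigl(\mathrm{OPT}-\sum_{i=1}^m f_i(S^t_{\rm tr}\cup S^t_i)\Bigr).$$
   Context: $V$ is a finite ground set; $1\le l<k\le |V|$. For $i=1,\dots,m$, $f_i:2^V\to\mathbb{R}_{\ge 0}$; monotone means $A\subseteq B\Rightarrow f_i(A)\le f_i(B)$, submodular means $f_i(A)+f_i(B)\ge f_i(A\cup B)+f_i(A\cap B)$. $\mathrm{OPT}=\max_{|S_{\rm tr}|\le l}\sum_{i=1}^m\max_{|S_i|\le k-l}f_i(S_{\rm tr}\cup S_i)$ (all sets subsets of $V$). One round of the while-loop of Randomized meta-Greedy: compute $e_i^*\in\arg\max_{e\in V}[f_i(S_{\rm tr}\cup S_i\cup\{e\})-f_i(S_{\rm tr}\cup S_i)]$ for each $i$ and $e_{\rm tr}^*\in\arg\max_{e\in V}\sum_{i=1}^m[f_i(S_{\rm tr}\cup S_i\cup\{e\})-f_i(S_{\rm tr}\cup S_i)]$; then with probability $l/k$ add $e^*_{\rm tr}$ to $S_{\rm tr}$,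 and otherwise (probability $(k-l)/k$) add $e_i^*$ to $S_i$ for every $i$. *)

theory Defs
  imports "HOL-Probability.Probability"
begin

definition monotone_set_fun :: "'a set \<Rightarrow> ('a set \<Rightarrow> real) \<Rightarrow> bool" where
  "monotone_set_fun V g \<longleftrightarrow> (\<forall>A B. A \<subseteq> B \<and> B \<subseteq> V \<longrightarrow> g A \<le> g B)"

definition submodular_set_fun :: "'a set \<Rightarrow> ('a set \<Rightarrow> real) \<Rightarrow> bool" where
  "submodular_set_fun V g \<longleftrightarrow>
     (\<forall>A B. A \<subseteq> V \<and> B \<subseteq> V \<longrightarrow> g A + g B \<ge> g (A \<union> B) + g (A \<inter> B))"

definition OPT :: "'a set \<Rightarrow> nat \<Rightarrow> nat \<Rightarrow> nat \<Rightarrow> (nat \<Rightarrow> 'a set \<Rightarrow> real) \<Rightarrow> real" where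
  "OPT V l k m f =
     Max ((\<lambda>Str. \<Sum>i\<in>{1..m}. Max ((\<lambda>Si. f i (Str \<union> Si)) ` {Si. Si \<subseteq> V \<and> card Si \<le> k - l}))
          ` {Str. Str \<subseteq> V \<and> card Str \<le> l})"

text \<open>One round of Randomized meta-Greedy given the coin outcome
  (True: probability l/k, add e_tr to S_tr; False: add e_i to each S_i).\<close>
definition meta_greedy_round ::
  "'a set \<Rightarrow> (nat \<Rightarrow> 'a set) \<Rightarrow> 'a \<Rightarrow> (nat \<Rightarrow> 'a) \<Rightarrow> bool \<Rightarrow> 'a set \<times> (nat \<Rightarrow> 'a set)" where
  "meta_greedy_round Str S etr e coin =
     (if coin then (insert etr Str, S) else (Str, \<lambda>i. insert (e i) (S i)))"

end

theory Submission
  imports Defs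
begin


lemma submodD:
  assumes "submodular_set_fun V g" "A \<subseteq> V" "B \<subseteq> V"
  shows "g (A \<union> B) + g (A \<inter> B) \<le> g A + g B"
  using assms unfolding submodular_set_fun_def by simp

lemma monoD:
  assumes "monotone_set_fun V g" "A \<subseteq> B" "B \<subseteq> V"
  shows "g A \<le> g B"
  using assms unfolding monotone_set_fun_def by simp

lemma marg_sub:
  assumes mono: "monotone_set_fun V g" and sub: "submodular_set_fun V g"
    and A: "A \<subseteq> V" and T: "finite T" "T \<subseteq> V"
  shows "g (A \<union> T) - g A \<le> (\<Sum>x\<in>T. g (A \<union> {x}) - g A)"
  using T
proof (induction T rule: finite_induct)
  case empty then show ?case by simp
next
  case (insert x T)
  have xV: "x \<in> V" and TV: "T \<subseteq> V" using insert.prems by auto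
  have AxV: "A \<union> {x} \<subseteq> V" using A xV by simp
  have ATV: "A \<union> T \<subseteq> V" using A TV by simp
  have s: "g ((A \<union> {x}) \<union> (A \<union> T)) + g ((A \<union> {x}) \<inter> (A \<union> T)) \<le> g (A \<union> {x}) + g (A \<union> T)"
    by (rule submodD[OF sub AxV ATV])
  have m: "g A \<le> g ((A \<union> {x}) \<inter> (A \<union> T))"
    by (rule monoD[OF mono]) (use AxV in auto)
  have eq: "(A \<union> {x}) \<union> (A \<union> T) = A \<union> insert x T" by auto
  have ih: "g (A \<union> T) - g A \<le> (\<Sum>x\<in>T. g (A \<union> {x}) - g A)" using insert.IH[OF TV] .
  have "(\<Sum>y\<in>insert x T. g (A \<union> {y}) - g A) = (g (A \<union> {x}) - g A) + (\<Sum>y\<in>T. g (A \<union> {y}) - g A)"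
    using insert.hyps by (rule sum.insert)
  then show ?case using ih s m unfolding eq by linarith
qed

lemma marg_nonneg:
  assumes "monotone_set_fun V g" "A \<subseteq> V" "x \<in> V"
  shows "0 \<le> g (A \<union> {x}) - g A"
proof -
  have "g A \<le> g (A \<union> {x})" by (rule monoD[OF assms(1)]) (use assms in auto)
  then show ?thesis by simp
qed

theorem mainTheorem9:
  fixes V :: "'a set" and l k m :: nat and f :: "nat \<Rightarrow> 'a set \<Rightarrow> real"
    and Str :: "'a set" and S :: "nat \<Rightarrow> 'a set" and etr :: 'a and e :: "nat \<Rightarrow> 'a"
  assumes finV: "finite V"
    and lk: "1 \<le> l" "l < k" "k \<le> card V"
    and nonneg: "\<And>i A. i \<in> {1..m} \<Longrightarrow> A \<subseteq> V \<Longrightarrow> f i A \<ge> 0"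
    and mono: "\<And>i. i \<in> {1..m} \<Longrightarrow> monotone_set_fun V (f i)"
    and submod: "\<And>i. i \<in> {1..m} \<Longrightarrow> submodular_set_fun V (f i)"
    and Str: "Str \<subseteq> V" "card Str < l"
    and S: "\<And>i. i \<in> {1..m} \<Longrightarrow> S i \<subseteq> V" "\<And>i. i \<in> {1..m} \<Longrightarrow> card (S i) < k - l"
    and e_max: "\<And>i. i \<in> {1..m} \<Longrightarrow> e i \<in> V"
      "\<And>i x. i \<in> {1..m} \<Longrightarrow> x \<in> V \<Longrightarrow>
         f i (Str \<union> S i \<union> {x}) - f i (Str \<union> S i) \<le> f i (Str \<union> S i \<union> {e i}) - f i (Str \<union> S i)"
    and etr_max: "etr \<in> V"
      "\<And>x. x \<in> V \<Longrightarrow>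
         (\<Sum>i\<in>{1..m}. f i (Str \<union> S i \<union> {x}) - f i (Str \<union> S i))
           \<le> (\<Sum>i\<in>{1..m}. f i (Str \<union> S i \<union> {etr}) - f i (Str \<union> S i))"
  shows "measure_pmf.expectation (bernoulli_pmf (real l / real k))
           (\<lambda>coin. let (Str', S') = meta_greedy_round Str S etr e coin in
              \<Sum>i\<in>{1..m}. f i (Str' \<union> S' i) - f i (Str \<union> S i))
         \<ge> (1 / real k) * (OPT V l k m f - (\<Sum>i\<in>{1..m}. f i (Str \<union> S i)))"
  proof -
  let ?A = "\<lambda>i. Str \<union> S i"
  let ?mg = "\<lambda>i x. f i (Str \<union> S i \<union> {x}) - f i (Str \<union> S i)"
  define Dtr where "Dtr = (\<Sum>i\<in>{1..m}. ?mg i etr)"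
  define D where "D = (\<Sum>i\<in>{1..m}. ?mg i (e i))"
  define F where "F = (\<Sum>i\<in>{1..m}. f i (Str \<union> S i))"
  have AV: "\<And>i. i \<in> {1..m} \<Longrightarrow> ?A i \<subseteq> V" using Str S by auto
  have mgnn: "\<And>i x. i \<in> {1..m} \<Longrightarrow> x \<in> V \<Longrightarrow> 0 \<le> ?mg i x"
    using marg_nonneg[OF mono AV] by blast
  have Dtr0: "0 \<le> Dtr" unfolding Dtr_def using mgnn etr_max(1) by (intro sum_nonneg) auto
  have Di0: "\<And>i. i \<in> {1..m} \<Longrightarrow> 0 \<le> ?mg i (e i)" using mgnn e_max(1) by blast
  have kpos: "real k > 0" using lk by simp
  have lkr: "real l \<le> real k" using lk by simp
  have E: "measure_pmf.expectation (bernoulli_pmf (real l / real k))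
           (\<lambda>coin. let (Str', S') = meta_greedy_round Str S etr e coin in
              \<Sum>i\<in>{1..m}. f i (Str' \<union> S' i) - f i (Str \<union> S i))
        = Dtr * (real l / real k) + D * (1 - real l / real k)"
  proof -
    have "real l / real k \<le> 1" using kpos lkr by simp
    moreover have "0 \<le> real l / real k" by simp
    moreover have e1: "\<And>i. insert etr Str \<union> S i = Str \<union> S i \<union> {etr}" by auto
    moreover have e2: "\<And>i. Str \<union> insert (e i) (S i) = Str \<union> S i \<union> {e i}" by auto
    ultimately show ?thesis
      unfolding Dtr_def D_def meta_greedy_round_def by (simp add: e1 e2)
  qed
  have bound_i: "f i (T \<union> Ti) \<le> f i (?A i) + (\<Sum>x\<in>T. ?mg i x) + real (k - l) * ?mg i (e i)"
    if i: "i \<in> {1..m}" and T: "T \<subseteq> V" and Ti: "Ti \<subseteq> V" "card Ti \<le> k - l" for i T Ti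
  proof -
    have fT: "finite T" "finite Ti" using T Ti finV finite_subset by auto
    have "f i (T \<union> Ti) \<le> f i (?A i \<union> (T \<union> Ti))"
      using mono[OF i] AV[OF i] T Ti by (intro monoD[OF mono[OF i]]) auto
    also have "\<dots> \<le> f i (?A i) + (\<Sum>x\<in>T \<union> Ti. ?mg i x)"
      using marg_sub[OF mono[OF i] submod[OF i] AV[OF i], of "T \<union> Ti"] fT T Ti by simp
    also have "(\<Sum>x\<in>T \<union> Ti. ?mg i x) \<le> (\<Sum>x\<in>T. ?mg i x) + (\<Sum>x\<in>Ti. ?mg i x)"
    proof -
      have "(\<Sum>x\<in>T \<union> Ti. ?mg i x) = (\<Sum>x\<in>T. ?mg i x) + (\<Sum>x\<in>Ti. ?mg i x) - (\<Sum>x\<in>T \<inter> Ti. ?mg i x)"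
        using sum_Un[OF fT] by simp
      moreover have "0 \<le> (\<Sum>x\<in>T \<inter> Ti. ?mg i x)" using mgnn[OF i] T by (intro sum_nonneg) auto
      ultimately show ?thesis by simp
    qed
    also have "(\<Sum>x\<in>Ti. ?mg i x) \<le> real (card Ti) * ?mg i (e i)"
      using sum_bounded_above[of Ti "?mg i" "?mg i (e i)"] e_max(2)[OF i] Ti by auto
    also have "\<dots> \<le> real (k - l) * ?mg i (e i)"
      using Ti(2) Di0[OF i] by (intro mult_right_mono) auto
    finally show ?thesis by simp
  qed
  have finP: "\<And>n. finite {X. X \<subseteq> V \<and> card X \<le> n}"
    by (rule finite_subset[of _ "Pow V"]) (use finV in auto)
  have ne: "\<And>n. {X. X \<subseteq> V \<and> card X \<le> n} \<noteq> {}"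
  proof -
    fix n :: nat
    have "{} \<in> {X. X \<subseteq> V \<and> card X \<le> n}" by simp
    then show "{X. X \<subseteq> V \<and> card X \<le> n} \<noteq> {}" by blast
  qed
  define g where "g = (\<lambda>T. \<Sum>i\<in>{1..m}. Max ((\<lambda>Si. f i (T \<union> Si)) ` {Si. Si \<subseteq> V \<and> card Si \<le> k - l}))"
  define P where "P = g ` {Str. Str \<subseteq> V \<and> card Str \<le> l}"
  have OPTeq: "OPT V l k m f = Max P" unfolding OPT_def P_def g_def by (rule refl)
  have Pfin: "finite P" unfolding P_def using finP by simp
  have Pne: "P \<noteq> {}" unfolding P_def using ne by simp
  have Pb: "\<forall>y\<in>P. y \<le> F + real l * Dtr + real (k - l) * D"
  proof
    fix y assume "y \<in> P"
    then obtain T where T: "T \<subseteq> V" "card T \<le> l" and y: "y = g T"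
      unfolding P_def by blast
    have fT: "finite T" using T finV finite_subset by auto
    have "y \<le> (\<Sum>i\<in>{1..m}. f i (?A i) + (\<Sum>x\<in>T. ?mg i x) + real (k - l) * ?mg i (e i))"
      unfolding y g_def
    proof (rule sum_mono)
      fix i assume i: "i \<in> {1..m}"
      define Q where "Q = (\<lambda>Si. f i (T \<union> Si)) ` {Si. Si \<subseteq> V \<and> card Si \<le> k - l}"
      have Qf: "finite Q" unfolding Q_def using finP by simp
      have Qne: "Q \<noteq> {}" unfolding Q_def using ne by simp
      have Qb: "\<forall>z\<in>Q. z \<le> f i (?A i) + (\<Sum>x\<in>T. ?mg i x) + real (k - l) * ?mg i (e i)"
        unfolding Q_def using bound_i[OF i T(1)] by auto
      show "Max ((\<lambda>Si. f i (T \<union> Si)) ` {Si. Si \<subseteq> V \<and> card Si \<le> k - l}) \<le> f i (?A i) + (\<Sum>x\<in>T. ?mg i x) + real (k - l) * ?mg i (e i)"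
        unfolding Q_def[symmetric] using Max.boundedI[OF Qf Qne] Qb by blast
    qed
    also have "\<dots> = F + (\<Sum>x\<in>T. \<Sum>i\<in>{1..m}. ?mg i x) + real (k - l) * D"
      unfolding F_def D_def sum.distrib sum_distrib_left using sum.swap[of "\<lambda>i x. ?mg i x" T "{1..m}"] by simp
    also have "(\<Sum>x\<in>T. \<Sum>i\<in>{1..m}. ?mg i x) \<le> real (card T) * Dtr"
      using sum_bounded_above[of T "\<lambda>x. \<Sum>i\<in>{1..m}. ?mg i x" Dtr] etr_max(2) T unfolding Dtr_def by auto
    also have "\<dots> \<le> real l * Dtr" using T(2) Dtr0 by (intro mult_right_mono) auto
    finally show "y \<le> F + real l * Dtr + real (k - l) * D" by simp
  qed
  have OPTb: "OPT V l k m f \<le> F + real l * Dtr + real (k - l) * D"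
    unfolding OPTeq using Max.boundedI[OF Pfin Pne] Pb by blast
  have kl: "real (k - l) = real k - real l" using lk by simp
  have "(1 / real k) * (OPT V l k m f - F) \<le> (1 / real k) * (real l * Dtr + (real k - real l) * D)"
    using OPTb kpos kl by (intro mult_left_mono) auto
  also have "\<dots> = Dtr * (real l / real k) + D * (1 - real l / real k)"
    using kpos by (simp add: field_simps)
  finally show ?thesis unfolding E F_def by simp
qed


end
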